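(* $\mu$-almost surely, for every $m\in\mathbb Z$ the value $\phi(m)$ is finite; that is, almost surely every burger is eventually consumed by some order and every order consumes some earlier burger.
   Context: Fix an integer $k\ge 2$ and $p\in[0,1]$. Let $\Theta=\{b_1,\dots,b_k,o_1,\dots,o_k,F\}$, where $b_i$ is a burger of type $i$, $o_i$ is an order of type $i$, and $F$ is a flexible order. Words in $\Theta$ are considered modulo the relations $b_io_i=b_iF=\varnothing$ and $b_io_j=o_jb_i$ for $i\ne j$. Concretely, reading a word left to right, each $o_i$ consumes the most recent not-yet-consumed $b_i$ to its left, and each $F$ consumes the most recent not-yet-consumed burger of any type to its left. Let $(X(n))_{n\in\mathbb Z}$ be i.i.d. $\Theta$-valued random variables with $\mathbb P(X(n)=b_i)=\frac1{2k}$, $\mathbb P(X(n)=o_i)=\frac{1-p}{2k}$ for each $i$, and $\mathbb P(X(n)=F)=\frac p2$; let $\mu$ denote their law on $\Theta^{\mathbb Z}$. If the burger $X(m)$ is consumed by the order $X(n)$ (with $m<n$), set $\phi(m)=n$ and $\phi(n)=m$. If a burger $X(m)$ is never consumed, set $\phi(m)=\infty$. If an order $X(n)$ consumes no burger, set $\phi(n)=-\infty$. *)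

theory Defs
  imports "HOL-Probability.Probability"
begin

text \<open>The alphabet Theta: burgers and orders of types 0..k-1 (indices \<open>< k\<close>),
  and the flexible order F.\<close>
datatype theta = Burger nat | Order nat | Flex

definition is_burger :: "theta \<Rightarrow> bool" where
  "is_burger x = (case x of Burger _ \<Rightarrow> True | _ \<Rightarrow> False)"

text \<open>One-letter law: P(b_i) = 1/(2k), P(o_i) = (1-p)/(2k), P(F) = p/2.\<close>
definition theta_pmf :: "nat \<Rightarrow> real \<Rightarrow> theta pmf" where
  "theta_pmf k p =
     bind_pmf (bernoulli_pmf (1/2)) (\<lambda>b.
       if b then map_pmf Burger (pmf_of_set {..<k})
       else bind_pmf (bernoulli_pmf p) (\<lambda>f.
              if f then return_pmf Flex else map_pmf Order (pmf_of_set {..<k})))"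

definition burger_measure :: "nat \<Rightarrow> real \<Rightarrow> (int \<Rightarrow> theta) measure" where
  "burger_measure k p = (\<Pi>\<^sub>M n\<in>(UNIV::int set). measure_pmf (theta_pmf k p))"

text \<open>Stack of unconsumed burgers (position, type), most recent first.\<close>
fun del_first_type :: "nat \<Rightarrow> (nat \<times> nat) list \<Rightarrow> (nat \<times> nat) list" where
  "del_first_type i [] = []"
| "del_first_type i ((q, t) # s) = (if t = i then s else (q, t) # del_first_type i s)"

fun find_first_type :: "nat \<Rightarrow> (nat \<times> nat) list \<Rightarrow> nat option" where
  "find_first_type i [] = None"
| "find_first_type i ((q, t) # s) = (if t = i then Some q else find_first_type i s)"

fun consumed :: "(nat \<times> nat) list \<Rightarrow> theta \<Rightarrow> nat option" where
  "consumed s (Burger i) = None"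
| "consumed s (Order i) = find_first_type i s"
| "consumed s Flex = (case s of [] \<Rightarrow> None | (q, t) # _ \<Rightarrow> Some q)"

fun step :: "(nat \<times> nat) list \<Rightarrow> nat \<Rightarrow> theta \<Rightarrow> (nat \<times> nat) list" where
  "step s j (Burger i) = (j, i) # s"
| "step s j (Order i) = del_first_type i s"
| "step s j Flex = (case s of [] \<Rightarrow> [] | _ # s' \<Rightarrow> s')"

definition stack_of :: "theta list \<Rightarrow> (nat \<times> nat) list" where
  "stack_of w = fold (\<lambda>(j, x) s. step s j x) (zip [0..<length w] w) []"

text \<open>Which burger X(n) consumes
  among X(m..n-1) depends only on the finite word X(m), ..., X(n-1): reading it
  from the left starting with an empty stack, X(n) consumes X(m) iff it takes the
  entry at position 0.\<close>
definition matched :: "(int \<Rightarrow> theta) \<Rightarrow> int \<Rightarrow> int \<Rightarrow> bool" where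
  "matched X m n \<longleftrightarrow> m < n \<and>
     consumed (stack_of (map (\<lambda>j. X (m + int j)) [0..<nat (n - m)])) (X n) = Some 0"

definition phi_finite :: "(int \<Rightarrow> theta) \<Rightarrow> int \<Rightarrow> bool" where
  "phi_finite X m \<longleftrightarrow>
     (if is_burger (X m) then (\<exists>n. matched X m n) else (\<exists>l. matched X l m))"

end

theory Submission
  imports Defs
begin


lemma stack_of_Nil[simp]: "stack_of [] = []"
  by (simp add: stack_of_def)

lemma stack_of_snoc: "stack_of (w @ [x]) = step (stack_of w) (length w) x"
  by (simp add: stack_of_def)

lemma step_flex: "step s j Flex = tl s"
  by (cases s) auto

lemma del_subset: "set (del_first_type i s) \<subseteq> set s"
  by (induction i s rule: del_first_type.induct) auto

lemma del_sorted: "sorted_wrt R s \<Longrightarrow> sorted_wrt R (del_first_type i s)"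
  by (induction i s rule: del_first_type.induct) (auto dest: subsetD[OF del_subset])

definition sinv :: "(nat \<times> nat) list \<Rightarrow> nat \<Rightarrow> bool" where
  "sinv s n \<longleftrightarrow> sorted_wrt (\<lambda>a b. fst b < fst a) s \<and> (\<forall>e\<in>set s. fst e < n)"

lemma step_sinv: "sinv s j \<Longrightarrow> sinv (step s j x) (Suc j)"
proof (cases x)
  case (Burger i)
  assume "sinv s j" then show ?thesis using Burger by (auto simp: sinv_def)
next
  case (Order i)
  assume a: "sinv s j"
  have "set (del_first_type i s) \<subseteq> set s" by (rule del_subset)
  with a have "\<forall>e\<in>set (del_first_type i s). fst e < j" by (auto simp: sinv_def)
  with a show ?thesis using Order by (auto simp: sinv_def intro: del_sorted less_SucI)
next
  case Flex
  assume a: "sinv s j"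
  then show ?thesis using Flex by (cases s) (auto simp: sinv_def)
qed

lemma stack_sinv: "sinv (stack_of w) (length w)"
proof (induction w rule: rev_induct)
  case Nil then show ?case by (simp add: sinv_def)
next
  case (snoc x w) then show ?case by (simp add: stack_of_snoc step_sinv)
qed


definition sh :: "nat \<Rightarrow> (nat \<times> nat) list \<Rightarrow> (nat \<times> nat) list" where
  "sh d s = map (\<lambda>(q,t). (q + d, t)) s"

lemma tw_nil: "\<forall>e\<in>set (s::(nat\<times>nat) list). fst e < d \<Longrightarrow> takeWhile (\<lambda>e. d \<le> fst e) s = []"
  by (cases s) (auto simp: not_le)

lemma tw_del: "sorted_wrt (\<lambda>a b. fst b < fst a) s \<Longrightarrow>
  takeWhile (\<lambda>e. d \<le> fst e) (del_first_type i s) = del_first_type i (takeWhile (\<lambda>e. d \<le> fst e) s)"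
proof (induction i s rule: del_first_type.induct)
  case (1 i) then show ?case by simp
next
  case (2 i q t s)
  have so: "sorted_wrt (\<lambda>a b. fst b < fst a) s" using 2(2) by simp
  show ?case
  proof (cases "d \<le> q")
    case True
    show ?thesis
    proof (cases "t = i")
      case True
      with \<open>d \<le> q\<close> show ?thesis by simp
    next
      case False
      have "takeWhile (\<lambda>e. d \<le> fst e) (del_first_type i s) = del_first_type i (takeWhile (\<lambda>e. d \<le> fst e) s)"
        using 2(1)[OF False so] .
      with False \<open>d \<le> q\<close> show ?thesis by simp
    qed
  next
    case False
    then have "\<forall>e\<in>set s. fst e < d" using 2(2) by auto
    then have "\<forall>e\<in>set (del_first_type i s). fst e < d" using del_subset by blast
    have a: "takeWhile (\<lambda>e. d \<le> fst e) s = []" using \<open>\<forall>e\<in>set s. fst e < d\<close> by (rule tw_nil)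
    have b: "takeWhile (\<lambda>e. d \<le> fst e) (del_first_type i s) = []"
      using \<open>\<forall>e\<in>set (del_first_type i s). fst e < d\<close> by (rule tw_nil)
    from False a b show ?thesis by simp
  qed
qed

lemma tw_tl: "sorted_wrt (\<lambda>a b. fst b < fst a) (s::(nat\<times>nat) list) \<Longrightarrow>
  takeWhile (\<lambda>e. d \<le> fst e) (tl s) = tl (takeWhile (\<lambda>e. d \<le> fst e) s)"
proof (cases s)
  case (Cons a s')
  assume "sorted_wrt (\<lambda>a b. fst b < fst a) s"
  then show ?thesis using Cons
  proof (cases "d \<le> fst a")
    case False
    have "\<forall>e\<in>set s'. fst e < d" using \<open>sorted_wrt _ s\<close> Cons False by auto
    then show ?thesis using Cons False by (simp add: tw_nil)
  qed (simp add: Cons)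
qed simp

lemma del_sh: "del_first_type i (sh d s) = sh d (del_first_type i s)"
  by (induction i s rule: del_first_type.induct) (auto simp: sh_def)

lemma suffix_stack:
  "takeWhile (\<lambda>e. length u \<le> fst e) (stack_of (u @ v)) = sh (length u) (stack_of v)"
proof (induction v rule: rev_induct)
  case Nil
  have "sinv (stack_of u) (length u)" by (rule stack_sinv)
  then show ?case by (simp add: sinv_def sh_def tw_nil)
next
  case (snoc x v)
  have so: "sorted_wrt (\<lambda>a b. fst b < fst a) (stack_of (u @ v))"
    using stack_sinv[of "u @ v"] by (simp add: sinv_def)
  have e1: "stack_of (u @ v @ [x]) = step (stack_of (u @ v)) (length u + length v) x"
    using stack_of_snoc[of "u @ v" x] by simp
  have e2: "stack_of (v @ [x]) = step (stack_of v) (length v) x"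
    by (rule stack_of_snoc)
  note IH = snoc.IH
  show ?case
  proof (cases x)
    case (Burger i) then show ?thesis unfolding e1 e2 using IH
      by (simp add: sh_def)
  next
    case (Order i) then show ?thesis unfolding e1 e2 using IH so
      by (simp add: tw_del del_sh)
  next
    case Flex then show ?thesis unfolding e1 e2 using IH so step_flex[of _ _] by (simp only: Flex step_flex) (simp add: tw_tl sh_def map_tl)
  qed
qed


lemma find_mem: "find_first_type i s = Some q \<Longrightarrow> (q, i) \<in> set s"
  by (induction i s rule: find_first_type.induct) (auto split: if_splits)

lemma find_tw: "find_first_type i (takeWhile P s) = Some q \<Longrightarrow> find_first_type i s = Some q"
  by (induction i s rule: find_first_type.induct) (auto split: if_splits)

lemma find_tw2: "sorted_wrt (\<lambda>a b. fst b < fst a) (s::(nat\<times>nat) list) \<Longrightarrow> find_first_type i s = Some q \<Longrightarrow> d \<le> q \<Longrightarrow>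
   find_first_type i (takeWhile (\<lambda>e. d \<le> fst e) s) = Some q"
proof (induction i s rule: find_first_type.induct)
  case (1 i) then show ?case by simp
next
  case (2 i q0 t s)
  show ?case
  proof (cases "t = i")
    case True with 2 show ?thesis by auto
  next
    case False
    with 2(3) have f: "find_first_type i s = Some q" by simp
    then have "(q, i) \<in> set s" by (rule find_mem)
    with 2(2) have "q < q0" by auto
    with 2(4) have "d \<le> q0" by simp
    have so: "sorted_wrt (\<lambda>a b. fst b < fst a) s" using 2(2) by simp
    from 2(1)[OF False so f 2(4)] False \<open>d \<le> q0\<close> show ?thesis by simp
  qed
qed

lemma find_sh: "find_first_type i (sh d s) = map_option (\<lambda>q. q + d) (find_first_type i s)"
  by (induction i s rule: find_first_type.induct) (auto simp: sh_def)

lemma consumed_sh: "consumed (sh d s) x = map_option (\<lambda>q. q + d) (consumed s x)"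
proof (cases x)
  case (Order i) then show ?thesis by (simp add: find_sh)
next
  case Flex then show ?thesis by (cases s) (auto simp: sh_def)
qed simp

lemma consumed_tw: "consumed (takeWhile P s) x = Some q \<Longrightarrow> consumed s x = Some q"
  by (cases x) (auto dest: find_tw split: list.splits if_splits)

lemma consumed_tw2: "sorted_wrt (\<lambda>a b. fst b < fst a) (s::(nat\<times>nat) list) \<Longrightarrow> consumed s x = Some q \<Longrightarrow> d \<le> q \<Longrightarrow>
   consumed (takeWhile (\<lambda>e. d \<le> fst e) s) x = Some q"
  by (cases x) (auto intro: find_tw2 split: list.splits)

lemma consumed_suffix1:
  "consumed (stack_of v) x = Some q \<Longrightarrow> consumed (stack_of (u @ v)) x = Some (q + length u)"
proof -
  assume a: "consumed (stack_of v) x = Some q"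
  have "consumed (takeWhile (\<lambda>e. length u \<le> fst e) (stack_of (u @ v))) x = Some (q + length u)"
    unfolding suffix_stack consumed_sh using a by simp
  then show ?thesis by (rule consumed_tw)
qed

lemma consumed_suffix2:
  "consumed (stack_of (u @ v)) x = Some q \<Longrightarrow> length u \<le> q \<Longrightarrow> consumed (stack_of v) x = Some (q - length u)"
proof -
  assume a: "consumed (stack_of (u @ v)) x = Some q" and b: "length u \<le> q"
  have so: "sorted_wrt (\<lambda>a b. fst b < fst a) (stack_of (u @ v))"
    using stack_sinv[of "u @ v"] by (simp add: sinv_def)
  have "consumed (takeWhile (\<lambda>e. length u \<le> fst e) (stack_of (u @ v))) x = Some q"
    by (rule consumed_tw2[OF so a b])
  then have "map_option (\<lambda>q. q + length u) (consumed (stack_of v) x) = Some q"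
    unfolding suffix_stack consumed_sh .
  then show ?thesis by auto
qed

lemma consumed_mem: "consumed s x = Some q \<Longrightarrow> \<exists>t. (q, t) \<in> set s"
  by (cases x) (auto dest: find_mem split: list.splits)

lemma consumed_keep: "e \<in> set s \<Longrightarrow> consumed s x \<noteq> Some (fst e) \<Longrightarrow> e \<in> set (step s j x)"
proof (cases x)
  case (Order i)
  assume "e \<in> set s" "consumed s x \<noteq> Some (fst e)"
  then show ?thesis using Order
    by (induction i s rule: del_first_type.induct) auto
next
  case Flex
  assume "e \<in> set s" "consumed s x \<noteq> Some (fst e)"
  then show ?thesis using Flex by (cases s) auto
qed auto

lemma del_removes: "sorted_wrt (\<lambda>a b. fst b < fst a) (s::(nat\<times>nat) list) \<Longrightarrow> find_first_type i s = Some q \<Longrightarrow>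
   (q, t) \<notin> set (del_first_type i s)"
proof (induction i s rule: del_first_type.induct)
  case (1 i) then show ?case by simp
next
  case (2 i q0 t0 s)
  show ?case
  proof (cases "t0 = i")
    case True
    with 2 show ?thesis by auto
  next
    case False
    with 2(3) have f: "find_first_type i s = Some q" by simp
    then have "(q, i) \<in> set s" by (rule find_mem)
    with 2(2) have "q < q0" by auto
    have so: "sorted_wrt (\<lambda>a b. fst b < fst a) s" using 2(2) by simp
    from 2(1)[OF False so f] False \<open>q < q0\<close> show ?thesis by simp
  qed
qed

lemma consumed_removes: "consumed s x = Some q \<Longrightarrow> sorted_wrt (\<lambda>a b. fst b < fst a) (s::(nat\<times>nat) list) \<Longrightarrow>
   (q, t) \<notin> set (step s j x)"
proof (cases x)
  case (Order i)
  assume "consumed s x = Some q" "sorted_wrt (\<lambda>a b. fst b < fst a) s"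
  then show ?thesis using Order
    by (auto dest: del_removes)
next
  case Flex
  assume "consumed s x = Some q" "sorted_wrt (\<lambda>a b. fst b < fst a) s"
  then show ?thesis using Flex by (cases s) auto
qed auto


definition win :: "(int \<Rightarrow> theta) \<Rightarrow> int \<Rightarrow> nat \<Rightarrow> theta list" where
  "win X a L = map (\<lambda>j. X (a + int j)) [0..<L]"

lemma length_win[simp]: "length (win X a L) = L"
  by (simp add: win_def)

lemma win_append: "win X a (L1 + L2) = win X a L1 @ win X (a + int L1) L2"
  by (rule nth_equalityI) (auto simp: win_def nth_append add.assoc)

lemma win_Suc: "win X a (Suc L) = win X a L @ [X (a + int L)]"
  by (simp add: win_def)

lemma matched_win: "matched X m n \<longleftrightarrow> m < n \<and> consumed (stack_of (win X m (nat (n - m)))) (X n) = Some 0"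
  by (simp add: matched_def win_def)

lemma step_subset: "set (step s j x) \<subseteq> set s \<union> {(j, i) | i. x = Burger i}"
proof (cases x)
  case (Order i) then show ?thesis using del_subset[of i s] by auto
next
  case Flex then show ?thesis by (cases s) auto
qed auto

lemma stack_entries: "e \<in> set (stack_of w) \<Longrightarrow> fst e < length w \<and> w ! fst e = Burger (snd e)"
proof (induction w arbitrary: e rule: rev_induct)
  case Nil then show ?case by simp
next
  case (snoc x w)
  have sub: "e \<in> set (stack_of w)" if "e \<in> set (step (stack_of w) (length w) x)" "fst e \<noteq> length w \<or> x \<noteq> Burger (snd e)" for e
    using that step_subset[of "stack_of w" "length w" x] by auto
  show ?case
  proof (cases "e \<in> set (stack_of w)")
    case True
    from snoc.IH[OF True] show ?thesis by (simp add: nth_append)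
  next
    case False
    have "e \<in> set (step (stack_of w) (length w) x)" using snoc.prems by (simp add: stack_of_snoc)
    with sub[of e] False have "fst e = length w \<and> x = Burger (snd e)" by blast
    then show ?thesis by simp
  qed
qed

lemma stack_low: "e \<in> set (stack_of (w @ w')) \<Longrightarrow> fst e < length w \<Longrightarrow> e \<in> set (stack_of w)"
proof (induction w' arbitrary: e rule: rev_induct)
  case Nil then show ?case by simp
next
  case (snoc x w')
  from snoc.prems(1) have "e \<in> set (step (stack_of (w @ w')) (length w + length w') x)"
    using stack_of_snoc[of "w @ w'" x] by simp
  then have "e \<in> set (stack_of (w @ w'))"
    using snoc.prems(2) step_subset[of "stack_of (w @ w')" "length w + length w'" x] by auto
  then show ?case using snoc.IH snoc.prems(2) by blast
qed

lemma matched_burger: "matched X m n \<Longrightarrow> is_burger (X m)"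
proof -
  assume "matched X m n"
  then have mn: "m < n" and c: "consumed (stack_of (win X m (nat (n - m)))) (X n) = Some 0"
    by (auto simp: matched_win)
  from consumed_mem[OF c] obtain t where "(0, t) \<in> set (stack_of (win X m (nat (n - m))))" by auto
  from stack_entries[OF this] mn show ?thesis by (simp add: win_def is_burger_def)
qed

lemma matched_order: "matched X m n \<Longrightarrow> \<not> is_burger (X n)"
  by (cases "X n") (auto simp: matched_def is_burger_def)

lemma order_unique: "matched X l n \<Longrightarrow> matched X l' n \<Longrightarrow> l = l'"
proof -
  have *: "False" if a: "matched X l n" "matched X l' n" "l < l'" for l l'
  proof -
    define d where "d = nat (l' - l)"
    have "nat (n - l) = d + nat (n - l')" using a by (auto simp: d_def matched_def)
    then have w: "win X l (nat (n - l)) = win X l d @ win X l' (nat (n - l'))"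
      using a(3) by (simp add: win_append d_def)
    from a(2) have "consumed (stack_of (win X l' (nat (n - l')))) (X n) = Some 0"
      by (simp add: matched_win)
    from consumed_suffix1[OF this, of "win X l d"]
    have "consumed (stack_of (win X l (nat (n - l)))) (X n) = Some d" by (simp add: w)
    moreover from a(1) have "consumed (stack_of (win X l (nat (n - l)))) (X n) = Some 0"
      by (simp add: matched_win)
    ultimately have "d = 0" by simp
    with a(3) show False by (simp add: d_def)
  qed
  assume "matched X l n" "matched X l' n"
  then show ?thesis using *[of l l'] *[of l' l] by fastforce
qed

lemma burger_unique: "matched X m n \<Longrightarrow> matched X m n' \<Longrightarrow> n = n'"
proof -
  have *: "False" if a: "matched X m n" "matched X m n'" "n < n'" for n n'
  proof -
    define L where "L = nat (n - m)"
    define S where "S = stack_of (win X m L)"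
    have mn: "m < n" using a by (simp add: matched_def)
    have c: "consumed S (X n) = Some 0" using a(1) by (simp add: matched_win S_def L_def)
    have so: "sorted_wrt (\<lambda>a b. fst b < fst a) S" using stack_sinv[of "win X m L"] by (simp add: S_def sinv_def)
    have S1: "stack_of (win X m (Suc L)) = step S L (X n)"
      using mn by (simp add: win_Suc stack_of_snoc S_def L_def)
    have no0: "(0, t) \<notin> set (stack_of (win X m (Suc L)))" for t
      unfolding S1 by (rule consumed_removes[OF c so])
    define L' where "L' = nat (n' - m)"
    have le: "Suc L \<le> L'" using a mn by (simp add: L_def L'_def)
    have w: "win X m L' = win X m (Suc L) @ win X (m + int (Suc L)) (L' - Suc L)"
      using win_append[of X m "Suc L" "L' - Suc L"] le by simp
    have c': "consumed (stack_of (win X m L')) (X n') = Some 0" using a(2) by (simp add: matched_win L'_def)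
    from consumed_mem[OF c'] obtain t where "(0, t) \<in> set (stack_of (win X m L'))" by auto
    then have "(0, t) \<in> set (stack_of (win X m (Suc L)))"
      unfolding w by (rule stack_low) simp
    with no0 show False by blast
  qed
  assume "matched X m n" "matched X m n'"
  then show ?thesis using *[of n n'] *[of n' n] by fastforce
qed

lemma find_exists: "(q, i) \<in> set s \<Longrightarrow> \<exists>q'. find_first_type i s = Some q'"
  by (induction i s rule: find_first_type.induct) auto

lemma unconsumed_in_stack:
  assumes "X a = Burger j" "\<And>t. \<not> matched X a t" "1 \<le> L"
  shows "(0, j) \<in> set (stack_of (win X a L))"
  using assms(3)
proof (induction L)
  case 0 then show ?case by simp
next
  case (Suc L)
  show ?case
  proof (cases "L = 0")
    case True then show ?thesis using assms(1) by (simp add: win_def stack_of_def)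
  next
    case False
    then have IH: "(0, j) \<in> set (stack_of (win X a L))" using Suc.IH by simp
    have "\<not> matched X a (a + int L)" by (rule assms(2))
    moreover have "nat (a + int L - a) = L" by simp
    moreover have "a < a + int L" using False by simp
    ultimately have "consumed (stack_of (win X a L)) (X (a + int L)) \<noteq> Some 0"
      unfolding matched_win by simp
    from consumed_keep[of "(0, j)", OF IH, simplified, OF this]
    show ?thesis by (simp add: win_Suc stack_of_snoc)
  qed
qed

lemma unconsumed_forces:
  assumes "X a = Burger j" "\<And>t. \<not> matched X a t" "a < n" "X n = Order j \<or> X n = Flex"
  shows "\<exists>l. matched X l n"
proof -
  define L where "L = nat (n - a)"
  define S where "S = stack_of (win X a L)"
  have L1: "1 \<le> L" using assms(3) by (simp add: L_def)
  have mem: "(0, j) \<in> set S" unfolding S_def by (rule unconsumed_in_stack[OF assms(1,2) L1])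
  obtain q where c: "consumed S (X n) = Some q"
    using assms(4) mem find_exists[OF mem] by (cases S) auto
  have "q < L" using consumed_mem[OF c] stack_sinv[of "win X a L"]
    by (auto simp: S_def sinv_def)
  have w: "win X a L = win X a q @ win X (a + int q) (L - q)"
    using win_append[of X a q "L - q"] \<open>q < L\<close> by simp
  have "consumed (stack_of (win X (a + int q) (L - q))) (X n) = Some 0"
    using consumed_suffix2[of "win X a q" "win X (a + int q) (L - q)" "X n" q] c
    by (simp add: S_def w[symmetric])
  moreover have "nat (n - (a + int q)) = L - q" using \<open>q < L\<close> by (simp add: L_def)
  moreover have "a + int q < n" using \<open>q < L\<close> by (simp add: L_def)
  ultimately have "matched X (a + int q) n" by (simp add: matched_win)
  then show ?thesis by blast
qed


instance theta :: countable by countable_datatype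

locale BM =
  fixes k :: nat and p :: real
  assumes k2: "2 \<le> k" and p0: "0 \<le> p" and p1: "p \<le> 1"
begin

abbreviation "N \<equiv> measure_pmf (theta_pmf k p)"
abbreviation "M \<equiv> burger_measure k p"

lemma M_def': "M = (\<Pi>\<^sub>M n\<in>(UNIV::int set). N)"
  by (simp add: burger_measure_def)

sublocale prob_space M
  unfolding M_def' by (rule prob_space_PiM) (rule measure_pmf.prob_space_axioms)

lemma space_M[simp]: "space M = UNIV"
  unfolding M_def' by (simp add: space_PiM)

lemma coord_meas: "(\<lambda>X. X i) \<in> measurable M N"
  unfolding M_def' by (rule measurable_component_singleton) simp

lemma coord_sets[simp, intro]: "{X. P (X i)} \<in> sets M"
proof -
  have "(\<lambda>X. X i) -` {x. P x} \<inter> space M \<in> sets M"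
    by (rule measurable_sets[OF coord_meas]) simp
  then show ?thesis by (simp add: vimage_def)
qed

lemma mapJ_meas: "(\<lambda>X. map X J) \<in> measurable M (count_space UNIV)"
proof -
  have "{X. map X J = w} \<in> sets M" for w
  proof (induction J arbitrary: w)
    case Nil then show ?case using sets.top[of M] by (cases w) auto
  next
    case (Cons j J)
    show ?case
    proof (cases w)
      case Nil then show ?thesis by simp
    next
      case (Cons y ws)
      have "{X. map X (j # J) = w} = {X. X j = y} \<inter> {X. map X J = ws}"
        using Cons by auto
      then show ?thesis using Cons.IH by auto
    qed
  qed
  then show ?thesis
    by (subst measurable_count_space_eq2_countable) (auto simp: vimage_def)
qed

lemma mapJ_sets[simp, intro]: "{X. Q (map X J)} \<in> sets M"
proof -
  have "(\<lambda>X. map X J) -` {x. Q x} \<inter> space M \<in> sets M"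
    by (rule measurable_sets[OF mapJ_meas]) simp
  then show ?thesis by (simp add: vimage_def)
qed

lemma matched_sets[simp, intro]: "{X. matched X m n} \<in> sets M"
proof -
  define J where "J = map (\<lambda>j. m + int j) [0..<nat (n - m)] @ [n]"
  have "matched X m n \<longleftrightarrow> m < n \<and> consumed (stack_of (butlast (map X J))) (last (map X J)) = Some 0" for X
    by (simp add: J_def matched_win win_def butlast_append comp_def)
  then have "{X. matched X m n} = {X. (\<lambda>ys. m < n \<and> consumed (stack_of (butlast ys)) (last ys) = Some 0) (map X J)}"
    by auto
  then show ?thesis
    using mapJ_sets[of "\<lambda>ys. m < n \<and> consumed (stack_of (butlast ys)) (last ys) = Some 0" J] by simp
qed

end


definition shiftX :: "int \<Rightarrow> (int \<Rightarrow> theta) \<Rightarrow> (int \<Rightarrow> theta)" where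
  "shiftX c X = (\<lambda>i. X (i + c))"

lemma matched_shift: "matched (shiftX c X) m n \<longleftrightarrow> matched X (m + c) (n + c)"
  by (simp add: matched_def shiftX_def algebra_simps)

definition dep :: "(int \<Rightarrow> theta) set \<Rightarrow> int set \<Rightarrow> bool" where
  "dep E J \<longleftrightarrow> (\<forall>X Y. (\<forall>i\<in>J. X i = Y i) \<longrightarrow> (X \<in> E \<longleftrightarrow> Y \<in> E))"

context BM
begin

lemma coord_meas': "(\<lambda>X. X i) \<in> measurable M (count_space UNIV)"
  using coord_meas[of i] by simp

lemma shift_meas: "shiftX c \<in> measurable M M"
proof -
  have "(\<lambda>X i. X (i + c)) \<in> measurable M (\<Pi>\<^sub>M n\<in>(UNIV::int set). N)"
    by (rule measurable_PiM_single') (auto intro: coord_meas coord_meas')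
  then show ?thesis by (simp add: shiftX_def[abs_def] M_def'[symmetric])
qed

lemma distr_shift: "distr M M (shiftX c) = M"
proof -
  have "distr (\<Pi>\<^sub>M n\<in>(UNIV::int set). N) (\<Pi>\<^sub>M n\<in>(UNIV::int set). N) (\<lambda>\<omega>. \<lambda>n\<in>UNIV. \<omega> (n + c)) = (\<Pi>\<^sub>M n\<in>(UNIV::int set). N)"
    using distr_PiM_reindex[of UNIV "\<lambda>_. N" "\<lambda>i. i + c" UNIV]
    by (simp add: measure_pmf.prob_space_axioms inj_on_def)
  moreover have "(\<lambda>\<omega>. \<lambda>n\<in>(UNIV::int set). \<omega> (n + c)) = shiftX c"
    by (simp add: shiftX_def[abs_def] restrict_UNIV)
  ultimately show ?thesis by (simp add: M_def'[symmetric])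
qed

lemma prob_shift: "E \<in> sets M \<Longrightarrow> prob (shiftX c -` E) = prob E"
proof -
  assume E: "E \<in> sets M"
  have "measure (distr M M (shiftX c)) E = measure M (shiftX c -` E \<inter> space M)"
    by (rule measure_distr[OF shift_meas E])
  then show ?thesis by (simp add: distr_shift)
qed

lemma coords_indep: "indep_vars (\<lambda>_. N) (\<lambda>i X. X i) UNIV"
proof -
  have rv: "random_variable N (\<lambda>X. X i)" for i by (rule coord_meas)
  have "distr M (\<Pi>\<^sub>M i\<in>UNIV. N) (\<lambda>x. \<lambda>i\<in>UNIV. x i) = M"
    by (simp add: restrict_UNIV M_def'[symmetric] distr_id2)
  moreover have "(\<Pi>\<^sub>M i\<in>(UNIV::int set). distr M N (\<lambda>x. x i)) = M"
  proof -
    have "distr M N (\<lambda>x. x i) = N" for i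
      unfolding M_def' by (rule distr_PiM_component) (auto intro: measure_pmf.prob_space_axioms)
    then show ?thesis by (simp add: M_def')
  qed
  ultimately show ?thesis
    by (subst indep_vars_iff_distr_eq_PiM) (auto intro: rv coord_meas' simp: M_def'[symmetric])
qed

definition ext :: "int set \<Rightarrow> (int \<Rightarrow> theta) \<Rightarrow> (int \<Rightarrow> theta)" where
  "ext J f = (\<lambda>i. if i \<in> J then f i else Flex)"

lemma ext_meas: "ext J \<in> measurable (\<Pi>\<^sub>M i\<in>J. N) M"
proof -
  have "(\<lambda>f i. if i \<in> J then f i else Flex) \<in> measurable (\<Pi>\<^sub>M i\<in>J. N) (\<Pi>\<^sub>M n\<in>(UNIV::int set). N)"
  proof (rule measurable_PiM_single')
    fix i :: int
    show "(\<lambda>f. if i \<in> J then f i else Flex) \<in> measurable (\<Pi>\<^sub>M i\<in>J. N) N"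
      by (cases "i \<in> J") (auto intro: measurable_component_singleton)
  qed auto
  then show ?thesis by (simp add: ext_def[abs_def] M_def'[symmetric])
qed

lemma dep_restrict:
  assumes E: "E \<in> sets M" and d: "dep E J"
  shows "\<exists>E'\<in>sets (\<Pi>\<^sub>M i\<in>J. N). E = (\<lambda>X. restrict (\<lambda>i. X i) J) -` E' \<inter> space M"
proof (intro bexI)
  let ?E' = "ext J -` E \<inter> space (\<Pi>\<^sub>M i\<in>J. N)"
  show "?E' \<in> sets (\<Pi>\<^sub>M i\<in>J. N)"
    by (rule measurable_sets[OF ext_meas E])
  show "E = (\<lambda>X. restrict (\<lambda>i. X i) J) -` ?E' \<inter> space M"
  proof (intro set_eqI iffI)
    fix X assume "X \<in> E"
    moreover have "\<forall>i\<in>J. ext J (restrict X J) i = X i" by (simp add: ext_def)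
    ultimately have "ext J (restrict X J) \<in> E" using d unfolding dep_def by blast
    then show "X \<in> (\<lambda>X. restrict (\<lambda>i. X i) J) -` ?E' \<inter> space M"
      by (simp add: space_PiM)
  next
    fix X assume "X \<in> (\<lambda>X. restrict (\<lambda>i. X i) J) -` ?E' \<inter> space M"
    then have "ext J (restrict X J) \<in> E" by simp
    moreover have "\<forall>i\<in>J. ext J (restrict X J) i = X i" by (simp add: ext_def)
    ultimately show "X \<in> E" using d unfolding dep_def by blast
  qed
qed

lemma indep_events:
  assumes E1: "E1 \<in> sets M" "dep E1 J1" and E2: "E2 \<in> sets M" "dep E2 J2" and J: "J1 \<inter> J2 = {}"
  shows "prob (E1 \<inter> E2) = prob E1 * prob E2"
proof -
  obtain E1' where E1': "E1' \<in> sets (\<Pi>\<^sub>M i\<in>J1. N)" "E1 = (\<lambda>X. restrict (\<lambda>i. X i) J1) -` E1' \<inter> space M"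
    using dep_restrict[OF E1] by blast
  obtain E2' where E2': "E2' \<in> sets (\<Pi>\<^sub>M i\<in>J2. N)" "E2 = (\<lambda>X. restrict (\<lambda>i. X i) J2) -` E2' \<inter> space M"
    using dep_restrict[OF E2] by blast
  have ind: "indep_var (\<Pi>\<^sub>M i\<in>J1. N) (\<lambda>\<omega>. restrict (\<lambda>i. \<omega> i) J1) (\<Pi>\<^sub>M i\<in>J2. N) (\<lambda>\<omega>. restrict (\<lambda>i. \<omega> i) J2)"
    using indep_var_restrict[OF coords_indep J] by simp
  have "prob ((\<lambda>x. (restrict (\<lambda>i. x i) J1, restrict (\<lambda>i. x i) J2)) -` (E1' \<times> E2') \<inter> space M) =
        prob ((\<lambda>X. restrict (\<lambda>i. X i) J1) -` E1' \<inter> space M) * prob ((\<lambda>X. restrict (\<lambda>i. X i) J2) -` E2' \<inter> space M)"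
    by (rule indep_varD[OF ind E1'(1) E2'(1)])
  moreover have "(\<lambda>x. (restrict (\<lambda>i. x i) J1, restrict (\<lambda>i. x i) J2)) -` (E1' \<times> E2') \<inter> space M = E1 \<inter> E2"
    using E1'(2) E2'(2) by auto
  ultimately show ?thesis using E1'(2) E2'(2) by simp
qed

end


definition tsw :: "nat \<Rightarrow> nat \<Rightarrow> nat \<Rightarrow> nat" where
  "tsw a b i = (if i = a then b else if i = b then a else i)"

lemma tsw_inj: "tsw a b i = tsw a b j \<longleftrightarrow> i = j"
  by (auto simp: tsw_def)

lemma tsw_tsw[simp]: "tsw a b (tsw a b i) = i"
  by (auto simp: tsw_def)

fun sig :: "nat \<Rightarrow> nat \<Rightarrow> theta \<Rightarrow> theta" where
  "sig a b (Burger i) = Burger (tsw a b i)"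
| "sig a b (Order i) = Order (tsw a b i)"
| "sig a b Flex = Flex"

lemma sig_sig[simp]: "sig a b (sig a b x) = x"
  by (cases x) auto

abbreviation "tst a b \<equiv> map (\<lambda>(q, t). (q, tsw a b t))"

lemma del_tsw: "del_first_type (tsw a b i) (tst a b s) = tst a b (del_first_type i s)"
  by (induction i s rule: del_first_type.induct) (auto simp: tsw_inj)

lemma find_tsw: "find_first_type (tsw a b i) (tst a b s) = find_first_type i s"
  by (induction i s rule: find_first_type.induct) (auto simp: tsw_inj)

lemma step_tsw: "step (tst a b s) j (sig a b x) = tst a b (step s j x)"
  by (cases x) (auto simp: del_tsw split: list.splits)

lemma consumed_tsw: "consumed (tst a b s) (sig a b x) = consumed s x"
  by (cases x) (auto simp: find_tsw split: list.splits)

lemma stack_tsw: "stack_of (map (sig a b) w) = tst a b (stack_of w)"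
proof (induction w rule: rev_induct)
  case Nil then show ?case by simp
next
  case (snoc x w)
  then show ?case by (simp add: stack_of_snoc step_tsw)
qed

lemma matched_sig: "matched (sig a b \<circ> X) m n \<longleftrightarrow> matched X m n"
proof -
  have "win (sig a b \<circ> X) m L = map (sig a b) (win X m L)" for L
    by (simp add: win_def)
  then show ?thesis by (simp add: matched_win stack_tsw consumed_tsw)
qed

context BM
begin

lemma map_pmf_sig: "a < k \<Longrightarrow> b < k \<Longrightarrow> map_pmf (sig a b) (theta_pmf k p) = theta_pmf k p"
proof -
  assume ab: "a < k" "b < k"
  have "0 \<in> {..<k}" using k2 by simp
  then have k0: "{..<k} \<noteq> {}" by blast
  have img: "tsw a b ` {..<k} = {..<k}"
  proof
    show "tsw a b ` {..<k} \<subseteq> {..<k}" using ab by (auto simp: tsw_def)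
    show "{..<k} \<subseteq> tsw a b ` {..<k}"
    proof
      fix i assume "i \<in> {..<k}"
      then have "tsw a b i \<in> {..<k}" using ab by (auto simp: tsw_def)
      then show "i \<in> tsw a b ` {..<k}" by (metis image_eqI tsw_tsw)
    qed
  qed
  have inj: "inj_on (tsw a b) {..<k}" by (auto simp: inj_on_def tsw_inj)
  have P: "map_pmf (tsw a b) (pmf_of_set {..<k}) = pmf_of_set {..<k}"
    using map_pmf_of_set_inj[OF inj k0] img by simp
  have B: "map_pmf (sig a b) (map_pmf Burger (pmf_of_set {..<k})) = map_pmf Burger (pmf_of_set {..<k})"
  proof -
    have "map_pmf (sig a b) (map_pmf Burger (pmf_of_set {..<k})) = map_pmf Burger (map_pmf (tsw a b) (pmf_of_set {..<k}))"
      by (simp add: pmf.map_comp comp_def)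
    then show ?thesis by (simp only: P)
  qed
  have O: "map_pmf (sig a b) (map_pmf Order (pmf_of_set {..<k})) = map_pmf Order (pmf_of_set {..<k})"
  proof -
    have "map_pmf (sig a b) (map_pmf Order (pmf_of_set {..<k})) = map_pmf Order (map_pmf (tsw a b) (pmf_of_set {..<k}))"
      by (simp add: pmf.map_comp comp_def)
    then show ?thesis by (simp only: P)
  qed
  show ?thesis
    unfolding theta_pmf_def map_bind_pmf
    by (intro bind_pmf_cong refl) (auto simp: B O map_bind_pmf intro!: bind_pmf_cong)
qed

lemma distr_sig: "a < k \<Longrightarrow> b < k \<Longrightarrow> distr M M (\<lambda>X. sig a b \<circ> X) = M"
proof -
  assume ab: "a < k" "b < k"
  have ind: "indep_vars (\<lambda>_. N) (\<lambda>i X. sig a b (X i)) UNIV"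
    using indep_vars_compose2[OF coords_indep, of "\<lambda>_. sig a b" "\<lambda>_. N"] by simp
  have rv': "(\<lambda>X. sig a b (X i)) \<in> measurable M (count_space UNIV)" for i
    by (rule measurable_compose[OF coord_meas'[of i] measurable_count_space])
  have rv: "random_variable N (\<lambda>X. sig a b (X i))" for i
    using rv' by simp
  have dN: "distr M N (\<lambda>X. sig a b (X i)) = N" for i
  proof -
    have "distr M N (\<lambda>X. sig a b (X i)) = distr (distr M N (\<lambda>X. X i)) N (sig a b)"
      by (subst distr_distr) (auto intro: coord_meas' simp: comp_def)
    also have "distr M N (\<lambda>X. X i) = N"
      unfolding M_def' by (rule distr_PiM_component) (auto intro: measure_pmf.prob_space_axioms)
    also have "distr N N (sig a b) = distr N (count_space UNIV) (sig a b)"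
      by (rule distr_cong) auto
    also have "\<dots> = measure_pmf (map_pmf (sig a b) (theta_pmf k p))"
      by (simp add: map_pmf_rep_eq)
    also have "\<dots> = N" using map_pmf_sig[OF ab] by simp
    finally show ?thesis .
  qed
  have "distr M (\<Pi>\<^sub>M i\<in>UNIV. N) (\<lambda>x. \<lambda>i\<in>UNIV. sig a b (x i)) = (\<Pi>\<^sub>M i\<in>(UNIV::int set). distr M N (\<lambda>X. sig a b (X i)))"
    using ind by (subst (asm) indep_vars_iff_distr_eq_PiM) (auto intro: rv rv')
  then show ?thesis by (simp add: dN M_def'[symmetric] restrict_UNIV comp_def)
qed

lemma sig_meas: "a < k \<Longrightarrow> b < k \<Longrightarrow> (\<lambda>X. sig a b \<circ> X) \<in> measurable M M"
proof -
  assume ab: "a < k" "b < k"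
  have "(\<lambda>X i. sig a b (X i)) \<in> measurable M (\<Pi>\<^sub>M n\<in>(UNIV::int set). N)"
    by (rule measurable_PiM_single') (auto intro: measurable_compose[OF coord_meas' measurable_count_space])
  then show ?thesis by (simp add: M_def'[symmetric] comp_def)
qed

lemma prob_sig: "a < k \<Longrightarrow> b < k \<Longrightarrow> E \<in> sets M \<Longrightarrow> prob ((\<lambda>X. sig a b \<circ> X) -` E) = prob E"
proof -
  assume ab: "a < k" "b < k" and E: "E \<in> sets M"
  have "measure (distr M M (\<lambda>X. sig a b \<circ> X)) E = measure M ((\<lambda>X. sig a b \<circ> X) -` E \<inter> space M)"
    by (rule measure_distr[OF sig_meas[OF ab] E])
  then show ?thesis by (simp add: distr_sig[OF ab])
qed

end


lemma matched_cong:
  assumes "\<And>i. m \<le> i \<Longrightarrow> i \<le> n \<Longrightarrow> X i = Y i"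
  shows "matched X m n \<longleftrightarrow> matched Y m n"
proof (cases "m < n")
  case True
  have "win X m (nat (n - m)) = win Y m (nat (n - m))"
    unfolding win_def using True by (auto intro!: assms)
  moreover have "X n = Y n" using True by (auto intro!: assms)
  ultimately show ?thesis by (simp add: matched_win)
qed (simp add: matched_def)

definition AA :: "nat \<Rightarrow> nat \<Rightarrow> (int \<Rightarrow> theta) set" where
  "AA j L = {X. X 0 = Burger j} - (\<Union>n\<in>{1..int L}. {X. matched X 0 n})"
definition UU :: "nat \<Rightarrow> (int \<Rightarrow> theta) set" where
  "UU j = {X. X 0 = Burger j} - (\<Union>n. {X. matched X 0 n})"
definition BB :: "nat \<Rightarrow> nat \<Rightarrow> int \<Rightarrow> (int \<Rightarrow> theta) set" where
  "BB j L c = {X. X c = Order j \<or> X c = Flex} - (\<Union>l\<in>{c - int L..<c}. {X. matched X l c})"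
definition WW :: "nat \<Rightarrow> int \<Rightarrow> (int \<Rightarrow> theta) set" where
  "WW j c = {X. X c = Order j \<or> X c = Flex} - (\<Union>l. {X. matched X l c})"

lemma shiftX_apply[simp]: "shiftX c X i = X (i + c)"
  by (simp add: shiftX_def)

lemma matched_lt: "matched X m n \<Longrightarrow> m < n"
  by (simp add: matched_def)

lemma UU_WW_disj: "0 < c \<Longrightarrow> UU j \<inter> WW j c = {}"
  unfolding UU_def WW_def using unconsumed_forces[of _ 0 j c] by blast

lemma AA_dec: "decseq (AA j)"
  unfolding decseq_def AA_def by auto

lemma AA_Inter: "(\<Inter>L. AA j L) = UU j"
proof (intro set_eqI iffI)
  fix X assume X: "X \<in> (\<Inter>L. AA j L)"
  then have "X 0 = Burger j" by (auto simp: AA_def)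
  moreover have "\<not> matched X 0 n" for n
  proof
    assume m: "matched X 0 n"
    then have "0 < n" by (rule matched_lt)
    then have "n \<in> {1..int (nat n)}" by simp
    moreover have "X \<in> AA j (nat n)" using X by blast
    ultimately show False using m by (auto simp: AA_def)
  qed
  ultimately show "X \<in> UU j" by (simp add: UU_def)
qed (auto simp: AA_def UU_def)

lemma BB_dec: "decseq (\<lambda>L. BB j L c)"
  unfolding decseq_def BB_def by auto

lemma BB_Inter: "(\<Inter>L. BB j L c) = WW j c"
proof (intro set_eqI iffI)
  fix X assume X: "X \<in> (\<Inter>L. BB j L c)"
  then have "X c = Order j \<or> X c = Flex" by (auto simp: BB_def)
  moreover have "\<not> matched X l c" for l
  proof
    assume m: "matched X l c"
    then have "l < c" by (rule matched_lt)
    then have "l \<in> {c - int (nat (c - l))..<c}" by simp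
    moreover have "X \<in> BB j (nat (c - l)) c" using X by blast
    ultimately show False using m by (auto simp: BB_def)
  qed
  ultimately show "X \<in> WW j c" by (simp add: WW_def)
qed (auto simp: BB_def WW_def)

lemma BB_shift: "BB j L c = shiftX c -` BB j L 0"
proof (intro set_eqI)
  fix X
  have "(\<exists>l\<in>{c - int L..<c}. matched X l c) \<longleftrightarrow> (\<exists>l\<in>{- int L..<0}. matched X (l + c) c)"
  proof
    assume "\<exists>l\<in>{c - int L..<c}. matched X l c"
    then obtain l where "l \<in> {c - int L..<c}" "matched X l c" by blast
    then show "\<exists>l\<in>{- int L..<0}. matched X (l + c) c" by (intro bexI[of _ "l - c"]) auto
  next
    assume "\<exists>l\<in>{- int L..<0}. matched X (l + c) c"
    then obtain l where "l \<in> {- int L..<0}" "matched X (l + c) c" by blast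
    then show "\<exists>l\<in>{c - int L..<c}. matched X l c" by (intro bexI[of _ "l + c"]) auto
  qed
  then show "X \<in> BB j L c \<longleftrightarrow> X \<in> shiftX c -` BB j L 0"
    by (simp add: BB_def matched_shift)
qed

lemma WW_shift: "WW j c = shiftX c -` WW j 0"
proof (intro set_eqI)
  fix X
  have "(\<exists>l. matched X l c) \<longleftrightarrow> (\<exists>l. matched X (l + c) c)"
    by (metis diff_add_cancel)
  then show "X \<in> WW j c \<longleftrightarrow> X \<in> shiftX c -` WW j 0"
    by (simp add: WW_def matched_shift)
qed

lemma AA_dep: "dep (AA j L) {0..int L}"
  unfolding dep_def
proof (intro allI impI)
  fix X Y :: "int \<Rightarrow> theta" assume e: "\<forall>i\<in>{0..int L}. X i = Y i"
  have "matched X 0 n \<longleftrightarrow> matched Y 0 n" if "n \<in> {1..int L}" for n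
    using that e by (intro matched_cong) auto
  moreover have "X 0 = Y 0" using e by auto
  ultimately show "X \<in> AA j L \<longleftrightarrow> Y \<in> AA j L"
    unfolding AA_def by auto
qed

lemma BB_dep: "dep (BB j L c) {c - int L..c}"
  unfolding dep_def
proof (intro allI impI)
  fix X Y :: "int \<Rightarrow> theta" assume e: "\<forall>i\<in>{c - int L..c}. X i = Y i"
  have "matched X l c \<longleftrightarrow> matched Y l c" if "l \<in> {c - int L..<c}" for l
    using that e by (intro matched_cong) auto
  moreover have "X c = Y c" using e by auto
  ultimately show "X \<in> BB j L c \<longleftrightarrow> Y \<in> BB j L c"
    unfolding BB_def by auto
qed

context BM
begin

lemma AA_sets[simp, intro]: "AA j L \<in> sets M"
  unfolding AA_def by (intro sets.Diff sets.countable_UN) auto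
lemma UU_sets[simp, intro]: "UU j \<in> sets M"
  unfolding UU_def by (intro sets.Diff sets.countable_UN) auto
lemma BB_sets[simp, intro]: "BB j L c \<in> sets M"
  unfolding BB_def by (intro sets.Diff sets.countable_UN) auto
lemma WW_sets[simp, intro]: "WW j c \<in> sets M"
  unfolding WW_def by (intro sets.Diff sets.countable_UN) auto

lemma mixing: "prob (UU j) * prob (WW j 0) = 0"
proof -
  define u where "u = prob (UU j)"
  define w where "w = prob (WW j 0)"
  define a where "a L = prob (AA j L)" for L
  define b where "b L = prob (BB j L 0)" for L
  have la: "a \<longlonglongrightarrow> u"
    unfolding a_def u_def AA_Inter[symmetric]
    by (rule finite_Lim_measure_decseq) (auto intro: AA_dec)
  have lb: "b \<longlonglongrightarrow> w"
    unfolding b_def w_def BB_Inter[symmetric]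
    by (rule finite_Lim_measure_decseq) (auto intro: BB_dec)
  have key: "u * w \<le> (a L - u) + (b L - w)" for L
  proof -
    define c where "c = 2 * int L + 1"
    have c0: "0 < c" by (simp add: c_def)
    have pBc: "prob (BB j L c) = b L"
      unfolding b_def BB_shift[of j L c] by (rule prob_shift) simp
    have pWc: "prob (WW j c) = w"
      unfolding w_def WW_shift[of j c] by (rule prob_shift) simp
    have "{0..int L} \<inter> {c - int L..c} = {}" by (auto simp: c_def)
    then have i: "prob (AA j L \<inter> BB j L c) = a L * b L"
      using indep_events[OF AA_sets AA_dep BB_sets BB_dep] pBc by (simp add: a_def)
    have UA: "UU j \<subseteq> AA j L" using AA_Inter by blast
    have WB: "WW j c \<subseteq> BB j L c" using BB_Inter by blast
    have "AA j L \<inter> BB j L c \<subseteq> (AA j L - UU j) \<union> (BB j L c - WW j c)"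
      using UU_WW_disj[OF c0, of j] by blast
    then have "prob (AA j L \<inter> BB j L c) \<le> prob ((AA j L - UU j) \<union> (BB j L c - WW j c))"
      by (intro finite_measure_mono) auto
    also have "\<dots> \<le> prob (AA j L - UU j) + prob (BB j L c - WW j c)"
      by (intro measure_subadditive) (auto simp: emeasure_eq_measure)
    also have "\<dots> = (a L - u) + (b L - w)"
      using UA WB by (simp add: finite_measure_Diff a_def u_def pBc pWc)
    finally have 1: "a L * b L \<le> (a L - u) + (b L - w)" using i by simp
    have "u \<le> a L" unfolding u_def a_def using UA by (intro finite_measure_mono) auto
    moreover have "w \<le> b L" unfolding w_def b_def using BB_Inter[of j 0] by (intro finite_measure_mono) blast+
    moreover have "0 \<le> u" "0 \<le> w" by (simp_all add: u_def w_def)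
    ultimately have "u * w \<le> a L * b L" by (intro mult_mono) auto
    with 1 show ?thesis by linarith
  qed
  have "(\<lambda>L. (a L - u) + (b L - w)) \<longlonglongrightarrow> (u - u) + (w - w)"
    by (intro tendsto_intros la lb)
  then have "u * w \<le> (u - u) + (w - w)"
    by (rule LIMSEQ_le_const) (auto intro: key)
  moreover have "0 \<le> u * w" by (simp add: u_def w_def)
  ultimately have "u * w = 0" by simp
  then show ?thesis by (simp add: u_def w_def)
qed

end


definition S0 :: "nat \<Rightarrow> theta set" where
  "S0 k = {x. case x of Burger j \<Rightarrow> j < k | Order j \<Rightarrow> j < k | Flex \<Rightarrow> True}"

context BM
begin

lemma Zs[simp, intro]: "{X. X 0 \<notin> S0 k} \<in> sets M"
  using coord_sets[of "\<lambda>x. x \<notin> S0 k" 0] by simp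

lemma prob_coord: "prob {X. X i \<in> S} = measure N S"
proof -
  have d: "distr M N (\<lambda>X. X i) = N"
    unfolding M_def' by (rule distr_PiM_component) (auto intro: measure_pmf.prob_space_axioms)
  have "measure (distr M N (\<lambda>X. X i)) S = prob ((\<lambda>X. X i) -` S \<inter> space M)"
    by (rule measure_distr[OF coord_meas]) simp
  then show ?thesis by (simp add: d vimage_def)
qed

lemma map_burger: "map_pmf is_burger (theta_pmf k p) = bernoulli_pmf (1/2)"
proof -
  have "0 \<in> {..<k}" using k2 by simp
  then have k0: "{..<k} \<noteq> {}" by blast
  let ?P = "pmf_of_set {..<k}"
  have i1: "map_pmf is_burger (map_pmf Burger ?P) = return_pmf True"
    by (simp add: pmf.map_comp comp_def is_burger_def)
  have f: "(\<lambda>f. map_pmf is_burger (if f then return_pmf Flex else map_pmf Order ?P)) = (\<lambda>_. return_pmf False)"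
    by (auto simp: fun_eq_iff pmf.map_comp comp_def is_burger_def)
  have i2: "map_pmf is_burger (bind_pmf (bernoulli_pmf p) (\<lambda>f. if f then return_pmf Flex else map_pmf Order ?P)) = return_pmf False"
    by (simp only: map_bind_pmf f bind_pmf_const)
  have "map_pmf is_burger (theta_pmf k p) = bind_pmf (bernoulli_pmf (1/2)) return_pmf"
    unfolding theta_pmf_def map_bind_pmf
    apply (intro bind_pmf_cong refl)
    subgoal for b by (cases b) (simp_all only: i1 i2 if_True if_False)
    done
  then show ?thesis by (simp add: bind_return_pmf')
qed

lemma prob_burger: "prob {X. is_burger (X 0)} = 1/2"
proof -
  have "prob {X. is_burger (X 0)} = prob {X. X 0 \<in> {x. is_burger x}}" by simp
  also have "\<dots> = measure N {x. is_burger x}" by (rule prob_coord)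
  also have "\<dots> = measure (measure_pmf (map_pmf is_burger (theta_pmf k p))) {True}"
    by (simp add: vimage_def)
  also have "\<dots> = 1/2" by (simp add: map_burger measure_pmf_single)
  finally show ?thesis .
qed

lemma prob_nonburger: "prob {X. \<not> is_burger (X 0)} = 1/2"
proof -
  have "{X. \<not> is_burger (X 0)} = space M - {X. is_burger (X 0)}" by auto
  then show ?thesis using prob_compl[of "{X. is_burger (X 0)}"] prob_burger by simp
qed

lemma set_theta: "set_pmf (theta_pmf k p) \<subseteq> S0 k"
proof -
  have "0 \<in> {..<k}" using k2 by simp
  then have k0: "{..<k} \<noteq> {}" by blast
  show ?thesis
    unfolding theta_pmf_def S0_def using k0
    by (auto simp: set_bind_pmf set_pmf_of_set[OF k0] split: if_splits)
qed

lemma prob_Z: "prob {X. X 0 \<notin> S0 k} = 0"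
proof -
  have "prob {X. X 0 \<notin> S0 k} = prob {X. X 0 \<in> - S0 k}" by simp
  also have "\<dots> = measure N (- S0 k)" by (rule prob_coord)
  also have "\<dots> = 0" using set_theta by (subst measure_pmf_zero_iff) auto
  finally show ?thesis .
qed

end

definition "DD d = {X. matched X 0 (int d + 1)}"
definition "EE d = {X. matched X (- (int d + 1)) 0}"
definition "Bm = {X. is_burger (X 0) \<and> (\<exists>n. matched X 0 n)}"
definition "Om = {X. \<not> is_burger (X 0) \<and> (\<exists>l. matched X l 0)}"
definition "U0 = {X. is_burger (X 0)} - Bm"
definition "V0 = {X. \<not> is_burger (X 0)} - Om"

context BM
begin

lemma Bm_eq: "Bm = (\<Union>d. DD d)"
proof (intro set_eqI iffI)
  fix X assume "X \<in> Bm"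
  then obtain n where n: "matched X 0 n" by (auto simp: Bm_def)
  then have "0 < n" by (rule matched_lt)
  then have "n = int (nat (n - 1)) + 1" by simp
  with n show "X \<in> (\<Union>d. DD d)" unfolding DD_def by (metis (mono_tags, lifting) UNIV_I UN_iff mem_Collect_eq)
next
  fix X assume "X \<in> (\<Union>d. DD d)"
  then obtain d where "matched X 0 (int d + 1)" by (auto simp: DD_def)
  then show "X \<in> Bm" unfolding Bm_def using matched_burger by blast
qed

lemma Om_eq: "Om = (\<Union>d. EE d)"
proof (intro set_eqI iffI)
  fix X assume "X \<in> Om"
  then obtain l where l: "matched X l 0" by (auto simp: Om_def)
  then have "l < 0" by (rule matched_lt)
  then have "l = - (int (nat (- l - 1)) + 1)" by simp
  with l show "X \<in> (\<Union>d. EE d)" unfolding EE_def by (metis (mono_tags, lifting) UNIV_I UN_iff mem_Collect_eq)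
next
  fix X assume "X \<in> (\<Union>d. EE d)"
  then obtain d where "matched X (- (int d + 1)) 0" by (auto simp: EE_def)
  then show "X \<in> Om" unfolding Om_def using matched_order by blast
qed

lemma DD_disj: "disjoint_family DD"
  unfolding disjoint_family_on_def
proof (intro ballI impI)
  fix m n :: nat assume "m \<noteq> n"
  show "DD m \<inter> DD n = {}"
  proof (rule ccontr)
    assume "DD m \<inter> DD n \<noteq> {}"
    then obtain X where "matched X 0 (int m + 1)" "matched X 0 (int n + 1)" by (auto simp: DD_def)
    from burger_unique[OF this] \<open>m \<noteq> n\<close> show False by simp
  qed
qed

lemma EE_disj: "disjoint_family EE"
  unfolding disjoint_family_on_def
proof (intro ballI impI)
  fix m n :: nat assume "m \<noteq> n"
  show "EE m \<inter> EE n = {}"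
  proof (rule ccontr)
    assume "EE m \<inter> EE n \<noteq> {}"
    then obtain X where "matched X (- (int m + 1)) 0" "matched X (- (int n + 1)) 0" by (auto simp: EE_def)
    from order_unique[OF this] \<open>m \<noteq> n\<close> show False by simp
  qed
qed

lemma DD_sets[simp, intro]: "DD d \<in> sets M"
  unfolding DD_def by simp

lemma EE_sets[simp, intro]: "EE d \<in> sets M"
  unfolding EE_def by simp

lemma EE_DD: "prob (EE d) = prob (DD d)"
proof -
  have e: "EE d = shiftX (- (int d + 1)) -` DD d"
    by (auto simp: EE_def DD_def matched_shift)
  show ?thesis unfolding e by (rule prob_shift) simp
qed

lemma Bm_Om: "prob Bm = prob Om"
proof -
  have "(\<lambda>d. prob (DD d)) sums prob (\<Union>d. DD d)"
    by (rule finite_measure_UNION) (auto intro: DD_disj)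
  moreover have "(\<lambda>d. prob (EE d)) sums prob (\<Union>d. EE d)"
    by (rule finite_measure_UNION) (auto intro: EE_disj)
  ultimately show ?thesis by (simp add: Bm_eq Om_eq EE_DD sums_unique2)
qed

lemma Bm_sets[simp, intro]: "Bm \<in> sets M"
  unfolding Bm_eq DD_def by (intro sets.countable_UN) auto
lemma Om_sets[simp, intro]: "Om \<in> sets M"
  unfolding Om_eq EE_def by (intro sets.countable_UN) auto
lemma U0_sets[simp, intro]: "U0 \<in> sets M"
  unfolding U0_def by auto
lemma V0_sets[simp, intro]: "V0 \<in> sets M"
  unfolding V0_def by auto

lemma U0_V0: "prob U0 = prob V0"
proof -
  have "Bm \<subseteq> {X. is_burger (X 0)}" by (auto simp: Bm_def)
  then have "prob U0 = 1/2 - prob Bm" unfolding U0_def by (simp add: finite_measure_Diff prob_burger)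
  moreover have "Om \<subseteq> {X. \<not> is_burger (X 0)}" by (auto simp: Om_def)
  then have "prob V0 = 1/2 - prob Om" unfolding V0_def
    using finite_measure_Diff[OF coord_sets[of "\<lambda>x. \<not> is_burger x" 0] Om_sets] by (simp add: prob_nonburger)
  ultimately show ?thesis using Bm_Om by simp
qed

lemma UU_sym: "j < k \<Longrightarrow> prob (UU j) = prob (UU 0)"
proof -
  assume j: "j < k"
  have k0: "0 < k" using k2 by simp
  have "(\<lambda>X. sig 0 j \<circ> X) -` UU 0 = UU j"
  proof (intro set_eqI)
    fix X :: "int \<Rightarrow> theta"
    have "sig 0 j (X 0) = Burger 0 \<longleftrightarrow> X 0 = Burger j"
    proof (cases "X 0")
      case (Burger i)
      have "tsw 0 j i = 0 \<longleftrightarrow> tsw 0 j i = tsw 0 j j" by (simp add: tsw_def)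
      then show ?thesis using Burger by (simp add: tsw_inj)
    qed auto
    then show "X \<in> (\<lambda>X. sig 0 j \<circ> X) -` UU 0 \<longleftrightarrow> X \<in> UU j"
      by (simp add: UU_def matched_sig)
  qed
  then show ?thesis using prob_sig[OF k0 j, of "UU 0"] by simp
qed

lemma U0_bound: "prob U0 \<le> real k * prob (UU 0)"
proof -
  have "U0 \<subseteq> (\<Union>j\<in>{..<k}. UU j) \<union> {X. X 0 \<notin> S0 k}"
  proof
    fix X assume X: "X \<in> U0"
    then obtain j where j: "X 0 = Burger j" by (auto simp: U0_def is_burger_def split: theta.splits)
    show "X \<in> (\<Union>j\<in>{..<k}. UU j) \<union> {X. X 0 \<notin> S0 k}"
    proof (cases "j < k")
      case True
      with X j show ?thesis by (auto simp: U0_def UU_def Bm_def is_burger_def)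
    next
      case False
      with j show ?thesis by (auto simp: S0_def)
    qed
  qed
  then have "prob U0 \<le> prob ((\<Union>j\<in>{..<k}. UU j) \<union> {X. X 0 \<notin> S0 k})"
    using Zs by (intro finite_measure_mono) auto
  also have "\<dots> \<le> prob (\<Union>j\<in>{..<k}. UU j) + prob {X. X 0 \<notin> S0 k}"
    using Zs by (intro measure_subadditive) (auto simp: emeasure_eq_measure)
  also have "\<dots> \<le> (\<Sum>j\<in>{..<k}. prob (UU j))"
    using prob_Z by (simp add: finite_measure_subadditive_finite image_subset_iff)
  also have "\<dots> = (\<Sum>j\<in>{..<k}. prob (UU 0))"
    by (intro sum.cong refl UU_sym) simp
  finally show ?thesis by simp
qed

lemma V0_bound: "prob V0 \<le> (\<Sum>j\<in>{..<k}. prob (WW j 0))"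
proof -
  have k0: "0 < k" using k2 by simp
  have "V0 \<subseteq> (\<Union>j\<in>{..<k}. WW j 0) \<union> {X. X 0 \<notin> S0 k}"
  proof
    fix X assume X: "X \<in> V0"
    show "X \<in> (\<Union>j\<in>{..<k}. WW j 0) \<union> {X. X 0 \<notin> S0 k}"
    proof (cases "X 0")
      case (Burger i) with X show ?thesis by (simp add: V0_def is_burger_def)
    next
      case (Order i)
      show ?thesis
      proof (cases "i < k")
        case True with X Order show ?thesis by (auto simp: V0_def WW_def Om_def is_burger_def)
      next
        case False with Order show ?thesis by (auto simp: S0_def)
      qed
    next
      case Flex
      with X k0 have "X \<in> WW 0 0" by (auto simp: V0_def WW_def Om_def is_burger_def)
      with k0 show ?thesis by blast
    qed
  qed
  then have "prob V0 \<le> prob ((\<Union>j\<in>{..<k}. WW j 0) \<union> {X. X 0 \<notin> S0 k})"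
    using Zs by (intro finite_measure_mono) auto
  also have "\<dots> \<le> prob (\<Union>j\<in>{..<k}. WW j 0) + prob {X. X 0 \<notin> S0 k}"
    using Zs by (intro measure_subadditive) (auto simp: emeasure_eq_measure)
  also have "\<dots> \<le> (\<Sum>j\<in>{..<k}. prob (WW j 0))"
    using prob_Z by (simp add: finite_measure_subadditive_finite image_subset_iff)
  finally show ?thesis .
qed

lemma U0_zero: "prob U0 = 0"
proof (rule ccontr)
  assume "prob U0 \<noteq> 0"
  then have pos: "0 < prob U0" using measure_nonneg[of M U0] by linarith
  then have "0 < real k * prob (UU 0)" using U0_bound by linarith
  then have u: "0 < prob (UU 0)" by (simp add: zero_less_mult_iff)
  have "prob (WW j 0) = 0" if "j < k" for j
    using mixing[of j] UU_sym[OF that] u by simp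
  then have "(\<Sum>j\<in>{..<k}. prob (WW j 0)) = 0" by simp
  with V0_bound U0_V0 pos show False by simp
qed

lemma AE0: "AE X in M. phi_finite X 0"
proof (rule AE_I')
  have "prob V0 = 0" using U0_zero U0_V0 by simp
  moreover have "prob (U0 \<union> V0) \<le> prob U0 + prob V0"
    by (intro measure_subadditive) (auto simp: emeasure_eq_measure)
  ultimately have "prob (U0 \<union> V0) = 0" using U0_zero measure_nonneg[of M "U0 \<union> V0"] by simp
  then show "U0 \<union> V0 \<in> null_sets M"
    by (auto simp: null_sets_def emeasure_eq_measure)
  show "{X \<in> space M. \<not> phi_finite X 0} \<subseteq> U0 \<union> V0"
    by (auto simp: phi_finite_def U0_def V0_def Bm_def Om_def split: if_splits)
qed

lemma phi_shift: "phi_finite (shiftX m X) 0 \<longleftrightarrow> phi_finite X m"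
proof -
  have 1: "(\<exists>n. matched (shiftX m X) 0 n) \<longleftrightarrow> (\<exists>n. matched X m n)"
  proof
    assume "\<exists>n. matched (shiftX m X) 0 n"
    then obtain n where "matched (shiftX m X) 0 n" by blast
    then show "\<exists>n. matched X m n" by (auto simp: matched_shift)
  next
    assume "\<exists>n. matched X m n"
    then obtain n where n: "matched X m n" by blast
    have "matched (shiftX m X) 0 (n - m)" using n by (simp add: matched_shift)
    then show "\<exists>n. matched (shiftX m X) 0 n" by blast
  qed
  have 2: "(\<exists>l. matched (shiftX m X) l 0) \<longleftrightarrow> (\<exists>l. matched X l m)"
  proof
    assume "\<exists>l. matched (shiftX m X) l 0"
    then obtain l where "matched (shiftX m X) l 0" by blast
    then show "\<exists>l. matched X l m" by (auto simp: matched_shift)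
  next
    assume "\<exists>l. matched X l m"
    then obtain l where l: "matched X l m" by blast
    have "matched (shiftX m X) (l - m) 0" using l by (simp add: matched_shift)
    then show "\<exists>l. matched (shiftX m X) l 0" by blast
  qed
  show ?thesis unfolding phi_finite_def using 1 2 by simp
qed

lemma AE_all: "AE X in M. \<forall>m::int. phi_finite X m"
proof (subst AE_all_countable, intro allI)
  fix m :: int
  have "AE X in distr M M (shiftX m). phi_finite X 0" unfolding distr_shift by (rule AE0)
  then have "AE X in M. phi_finite (shiftX m X) 0" by (rule AE_distrD[OF shift_meas])
  then show "AE X in M. phi_finite X m" by (simp add: phi_shift)
qed

end

theorem proposition2p1:
  fixes k :: nat and p :: real
  assumes "k \<ge> 2" and "0 \<le> p" and "p \<le> 1"
  shows "AE X in burger_measure k p. \<forall>m::int. phi_finite X m"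
proof -
  interpret BM k p using assms by unfold_locales
  show ?thesis by (rule AE_all)
qed


end
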